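(* Consider $n$ sub-populations with constant sizes $N_i>0$ and constant nonnegative flows $F_{ij}\ge 0$ ($i\neq j$; $F_{ij}$ is the number of individuals per unit time flowing from sub-population $j$ to sub-population $i$, $F_{ii}=0$), and the dynamics, for $i\in[n]$, \begin{align*} \dot s_i &= \alpha_i r_i-\beta_i x_i s_i+\tfrac{1}{N_i}\textstyle\sum_{j\neq i}(F_{ij}s_j-F_{ji}s_i),\\ \dot e_i &= \beta_i x_i s_i-\sigma_i e_i+\tfrac{1}{N_i}\textstyle\sum_{j\neq i}(F_{ij}e_j-F_{ji}e_i),\\ \dot x_i &= \sigma_i e_i-\delta_i x_i+\tfrac{1}{N_i}\textstyle\sum_{j\neq i}(F_{ij}x_j-F_{ji}x_i),\\ \dot r_i &= \delta_i x_i-\alpha_i r_i+\tfrac{1}{N_i}\textstyle\sum_{j\neq i}(F_{ij}r_j-F_{ji}r_i). \end{align*} Assume (A1) for every $j\in[n]$, $\sum_{i\neq j}F_{ji}=\sum_{i\neq j}F_{ij}$ (total inflow into $j$ equals total outflow from $j$); and (A2) $\alpha_i,\beta_i,\sigma_i,\delta_i>0$ for all $i$, and the initial values at time $t_0\ge 0$ satisfy $s_i(t_0),e_i(t_0),x_i(t_0),r_i(t_0)\in[0,1]$ and $s_i(t_0)+e_i(t_0)+x_i(t_0)+r_i(t_0)=1$ for all $i\in[n]$. Then $s_i(t),e_i(t),x_i(t),r_i(t)\in[0,1]$ and $s_i(t)+e_i(t)+x_i(t)+r_i(t)=1$ for all $i\in[n]$ and all $t\ge 0$.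
   Context: This is a networked SEIRS epidemic model: $s_i,e_i,x_i,r_i$ are the proportions of susceptible, exposed, infected and recovered individuals in sub-population $i$; $\beta_i$ is the infection rate, $\sigma_i$ the exposed-to-infected rate, $\delta_i$ the healing rate, $\alpha_i$ the rate of immunity loss. *)

theory Defs
  imports "HOL-Analysis.Analysis"
begin

end

theory Submission imports Defs begin

lemma nonneg_invariance:
  fixes y D :: "'k \<Rightarrow> real \<Rightarrow> real" and K :: "'k set" and tz :: real
  assumes fin: "finite K"
    and deriv: "\<And>k t. k \<in> K \<Longrightarrow> t \<ge> tz \<Longrightarrow> (y k has_real_derivative D k t) (at t within {tz..})"
    and init: "\<And>k. k \<in> K \<Longrightarrow> y k tz \<ge> 0"
    and qp: "\<And>T k. k \<in> K \<Longrightarrow> \<exists>L. \<forall>t. tz \<le> t \<and> t \<le> T \<and> y k t \<le> 0 \<and> (\<forall>j\<in>K. y k t \<le> y j t) \<longrightarrow> L * y k t \<le> D k t"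
    and kK: "k \<in> K" and tt: "t \<ge> tz"
  shows "y k t \<ge> 0"
proof -
  define T where "T = t"
  from qp have "\<forall>k\<in>K. \<exists>L. \<forall>t. tz \<le> t \<and> t \<le> T \<and> y k t \<le> 0 \<and> (\<forall>j\<in>K. y k t \<le> y j t) \<longrightarrow> L * y k t \<le> D k t" by blast
  then obtain Lf where Lf0: "\<forall>k\<in>K. \<forall>t. tz \<le> t \<and> t \<le> T \<and> y k t \<le> 0 \<and> (\<forall>j\<in>K. y k t \<le> y j t) \<longrightarrow> Lf k * y k t \<le> D k t"
    by (rule bchoice[elim_format]) blast
  have Lf: "\<And>k t. k \<in> K \<Longrightarrow> tz \<le> t \<Longrightarrow> t \<le> T \<Longrightarrow> y k t \<le> 0 \<Longrightarrow> (\<forall>j\<in>K. y k t \<le> y j t) \<Longrightarrow> Lf k * y k t \<le> D k t"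
    using Lf0 by blast
  define L where "L = (\<Sum>k\<in>K. \<bar>Lf k\<bar>) + 1"
  have Lb: "\<bar>Lf k\<bar> \<le> L - 1" if "k \<in> K" for k
    unfolding L_def using fin that by (simp add: member_le_sum[of k K "\<lambda>k. \<bar>Lf k\<bar>"])
  have Lpos: "L > 0" unfolding L_def by (simp add: sum_nonneg add_nonneg_pos)
  have cont: "continuous_on {tz..T} (y k)" if "k \<in> K" for k
  proof -
    have "continuous_on {tz..} (y k)"
      using deriv[OF that] by (meson DERIV_continuous atLeast_iff continuous_on_eq_continuous_within)
    then show ?thesis by (rule continuous_on_subset) auto
  qed
  have isc: "isCont (y k) s" if "k \<in> K" "s > tz" for k s
  proof -
    have "(y k has_real_derivative D k s) (at s)"
      using deriv[OF that(1), of s] that(2) at_within_interior[of s "{tz..}"] by simp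
    then show ?thesis by (rule DERIV_isCont)
  qed
  define E where "E = (\<lambda>s. exp (2*L*(s-tz)))"
  have Epos: "E s > 0" for s unfolding E_def by simp
  have main: "\<forall>k\<in>K. \<forall>s\<in>{tz..T}. y k s + \<epsilon> * E s > 0" if eps: "\<epsilon> > 0" for \<epsilon>
  proof (rule ccontr)
    define w where "w = (\<lambda>k s. y k s + \<epsilon> * E s)"
    define S where "S = (\<Union>k\<in>K. {s \<in> {tz..T}. w k s \<le> 0})"
    assume "\<not> ?thesis"
    then have Sne: "S \<noteq> {}" unfolding S_def w_def by force
    have wc: "continuous_on {tz..T} (w k)" if "k \<in> K" for k
      unfolding w_def E_def using cont[OF that] by (auto intro!: continuous_intros)
    have "closed S" unfolding S_def
      using fin wc continuous_on_closed_Collect_le[of "{tz..T}" _ "\<lambda>_. 0"]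
      by (intro closed_UN) (auto intro: continuous_on_const)
    moreover have bdd: "bdd_below S" unfolding S_def by (auto intro: bdd_belowI[of _ tz])
    ultimately have tauS: "Inf S \<in> S" using Sne closed_contains_Inf by blast
    define \<tau> where "\<tau> = Inf S"
    have below: "\<forall>j\<in>K. w j s > 0" if "tz \<le> s" "s < \<tau>" for s
    proof (rule ccontr)
      assume "\<not> ?thesis"
      then obtain j where "j \<in> K" "w j s \<le> 0" by force
      moreover have "\<tau> \<le> T" using tauS unfolding \<tau>_def S_def by auto
      ultimately have "s \<in> S" using that unfolding S_def by auto
      then have "\<tau> \<le> s" unfolding \<tau>_def using bdd by (simp add: cInf_lower)
      then show False using that by simp
    qed
    obtain k0 where k0: "k0 \<in> K" "w k0 \<tau> \<le> 0" "tz \<le> \<tau>" "\<tau> \<le> T"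
      using tauS unfolding \<tau>_def S_def by auto
    have "\<tau> \<noteq> tz"
    proof
      assume "\<tau> = tz"
      then have "w k0 \<tau> > 0" unfolding w_def using init[OF k0(1)] Epos[of tz] eps
        by (simp add: E_def)
      then show False using k0 by simp
    qed
    then have tgt: "\<tau> > tz" using k0 by simp
    have wnn: "w j \<tau> \<ge> 0" if "j \<in> K" for j
    proof (rule ccontr)
      assume neg: "\<not> ?thesis"
      have "isCont (w j) \<tau>" unfolding w_def E_def using isc[OF that tgt] by (auto intro!: continuous_intros)
      then have "(w j \<longlongrightarrow> w j \<tau>) (at_left \<tau>)"
        by (simp add: isCont_def filterlim_at_split)
      then have "eventually (\<lambda>s. w j s < 0) (at_left \<tau>)"
        using neg by (intro order_tendstoD) auto
      moreover have "eventually (\<lambda>s. s \<in> {tz<..<\<tau>}) (at_left \<tau>)"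
        using tgt by (rule eventually_at_left_real)
      ultimately have "eventually (\<lambda>s. w j s < 0 \<and> s \<in> {tz<..<\<tau>}) (at_left \<tau>)"
        by (rule eventually_conj)
      then obtain s where "w j s < 0" "s \<in> {tz<..<\<tau>}"
        using eventually_happens' trivial_limit_at_left_real by blast
      then show False using below[of s] that by auto
    qed
    obtain k1 where k1: "k1 \<in> K" "\<forall>j\<in>K. y k1 \<tau> \<le> y j \<tau>"
    proof -
      have ne: "(\<lambda>j. y j \<tau>) ` K \<noteq> {}" using k0(1) by auto
      have fi: "finite ((\<lambda>j. y j \<tau>) ` K)" using fin by simp
      obtain k1 where "k1 \<in> K" "y k1 \<tau> = Min ((\<lambda>j. y j \<tau>) ` K)"
        using Min_in[OF fi ne] by auto
      moreover have "\<forall>j\<in>K. Min ((\<lambda>j. y j \<tau>) ` K) \<le> y j \<tau>"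
        using Min_le[OF fi] by auto
      ultimately show ?thesis using that by auto
    qed
    define \<eta> where "\<eta> = \<epsilon> * E \<tau>"
    have etapos: "\<eta> > 0" unfolding \<eta>_def using eps Epos by simp
    have y1: "y k1 \<tau> = - \<eta>"
      using k1 k0 wnn[OF k1(1)] unfolding w_def \<eta>_def by force
    have f1: "Lf k1 * y k1 \<tau> \<le> D k1 \<tau>"
      using Lf[OF k1(1) k0(3) k0(4)] k1 y1 etapos by simp
    have f2: "Lf k1 * y k1 \<tau> \<ge> - (L - 1) * \<eta>"
    proof -
      have "Lf k1 * y k1 \<tau> = - (Lf k1 * \<eta>)" using y1 by simp
      moreover have "Lf k1 * \<eta> \<le> (L - 1) * \<eta>"
        using Lb[OF k1(1)] etapos by (intro mult_right_mono) auto
      moreover have "- (L - 1) * \<eta> = - ((L - 1) * \<eta>)" by (simp add: algebra_simps)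
      ultimately show ?thesis by linarith
    qed
    have Dpos: "D k1 \<tau> + \<epsilon> * (E \<tau> * (2*L)) > 0"
    proof -
      have f3: "\<epsilon> * (E \<tau> * (2*L)) = 2 * (L * \<eta>)" unfolding \<eta>_def by simp
      have f4: "L * \<eta> > 0" using Lpos etapos by simp
      have f5: "- (L - 1) * \<eta> = - (L * \<eta>) + \<eta>" by (simp add: algebra_simps)
      show ?thesis using f1 f2 f3 f4 f5 etapos by linarith
    qed
    have dE: "((\<lambda>s. \<epsilon> * E s) has_real_derivative \<epsilon> * (E \<tau> * (2*L))) (at \<tau>)"
      unfolding E_def by (auto intro!: derivative_eq_intros)
    have dy: "(y k1 has_real_derivative D k1 \<tau>) (at \<tau>)"
      using deriv[OF k1(1), of \<tau>] tgt at_within_interior[of \<tau> "{tz..}"] by simp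
    have "(w k1 has_real_derivative D k1 \<tau> + \<epsilon> * (E \<tau> * (2*L))) (at \<tau>)"
      unfolding w_def using DERIV_add[OF dy dE] by simp
    from DERIV_pos_inc_left[OF this Dpos] obtain d where d: "d > 0"
      "\<And>h. h > 0 \<Longrightarrow> h < d \<Longrightarrow> w k1 (\<tau> - h) < w k1 \<tau>" by blast
    define h where "h = min (d/2) ((\<tau> - tz)/2)"
    have "h > 0" "h < d" using d tgt unfolding h_def by auto
    then have "w k1 (\<tau> - h) < w k1 \<tau>" using d by auto
    moreover have "w k1 \<tau> = 0" using y1 unfolding w_def \<eta>_def by simp
    moreover have "h \<le> (\<tau> - tz)/2" unfolding h_def by (rule min.cobounded2)
    with \<open>h > 0\<close> have "tz \<le> \<tau> - h" "\<tau> - h < \<tau>" by auto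
    then have "w k1 (\<tau> - h) > 0" using below[of "\<tau> - h"] k1 by auto
    ultimately show False by simp
  qed
  show ?thesis
  proof (rule ccontr)
    assume "\<not> ?thesis"
    then have neg: "y k t < 0" by simp
    define \<epsilon> where "\<epsilon> = - y k t / E t"
    have "\<epsilon> > 0" unfolding \<epsilon>_def using neg Epos[of t] by (intro divide_pos_pos) auto
    from main[OF this] kK tt have "y k t + \<epsilon> * E t > 0" unfolding T_def by auto
    moreover have "\<epsilon> * E t = - y k t" unfolding \<epsilon>_def using Epos[of t] by simp
    ultimately show False by simp
  qed
qed

lemma prod_bound:
  fixes e x s B :: real
  assumes "e \<le> 0" "e \<le> x" "e \<le> s" "\<bar>x\<bar> \<le> B" "\<bar>s\<bar> \<le> B"
  shows "B * e \<le> x * s"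
proof -
  have B0: "B \<ge> 0" using assms(4) by linarith
  have Be: "B * e \<le> 0" using B0 assms(1) by (simp add: mult_nonneg_nonpos)
  consider "x \<ge> 0" "s \<ge> 0" | "x < 0" "s \<ge> 0" | "x \<ge> 0" "s < 0" | "x < 0" "s < 0" by linarith
  then show ?thesis
  proof cases
    case 1 then show ?thesis using Be by (smt (verit) mult_nonneg_nonneg)
  next
    case 2
    have "e * s \<le> x * s" using 2 assms by (intro mult_right_mono) auto
    moreover have "e * B \<le> e * s" using 2 assms by (intro mult_left_mono_neg) auto
    ultimately show ?thesis by (simp add: mult.commute)
  next
    case 3
    have "x * e \<le> x * s" using 3 assms by (intro mult_left_mono) auto
    moreover have "B * e \<le> x * e" using 3 assms by (intro mult_right_mono_neg) auto
    ultimately show ?thesis by simp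
  next
    case 4 then show ?thesis using Be by (smt (verit) mult_neg_neg)
  qed
qed

lemma flow_nonneg:
  fixes F :: "nat \<Rightarrow> nat \<Rightarrow> real" and z :: "nat \<Rightarrow> real"
  assumes "i < n" "N i > 0"
    and Fn: "\<And>j. j < n \<Longrightarrow> j \<noteq> i \<Longrightarrow> F i j \<ge> 0"
    and A: "(\<Sum>j\<in>{..<n} - {i}. F i j) = (\<Sum>j\<in>{..<n} - {i}. F j i)"
    and zmin: "\<And>j. j < n \<Longrightarrow> z i \<le> z j"
  shows "0 \<le> (1 / N i) * (\<Sum>j\<in>{..<n} - {i}. F i j * z j - F j i * z i)"
proof -
  have "(\<Sum>j\<in>{..<n} - {i}. F i j * z i - F j i * z i) \<le> (\<Sum>j\<in>{..<n} - {i}. F i j * z j - F j i * z i)"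
    using Fn zmin by (intro sum_mono) (auto intro: mult_left_mono)
  moreover have "(\<Sum>j\<in>{..<n} - {i}. F i j * z i - F j i * z i)
      = z i * ((\<Sum>j\<in>{..<n} - {i}. F i j) - (\<Sum>j\<in>{..<n} - {i}. F j i))"
    by (simp add: sum_subtractf sum_distrib_left algebra_simps sum_distrib_right)
  ultimately have "0 \<le> (\<Sum>j\<in>{..<n} - {i}. F i j * z j - F j i * z i)" using A by simp
  then show ?thesis using assms(2) by simp
qed

lemma bnd_deriv:
  fixes f f' :: "real \<Rightarrow> real"
  assumes "\<And>t. t \<ge> t0 \<Longrightarrow> (f has_real_derivative f' t) (at t within {t0..})"
  shows "\<exists>B. \<forall>t\<in>{t0..T}. \<bar>f t\<bar> \<le> B"
proof -
  have "continuous_on {t0..} f"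
    using assms by (meson DERIV_continuous atLeast_iff continuous_on_eq_continuous_within)
  then have "continuous_on {t0..T} f" by (rule continuous_on_subset) auto
  then have "compact (f ` {t0..T})" by (intro compact_continuous_image) auto
  then have "bounded (f ` {t0..T})" by (rule compact_imp_bounded)
  then show ?thesis unfolding bounded_iff by auto
qed

theorem lemma5:
  fixes n :: nat
    and N :: "nat \<Rightarrow> real"
    and F :: "nat \<Rightarrow> nat \<Rightarrow> real"
    and \<alpha> \<beta> \<sigma> \<delta> :: "nat \<Rightarrow> real"
    and s e x r :: "nat \<Rightarrow> real \<Rightarrow> real"
    and t0 :: real
  assumes N_pos: "\<And>i. i < n \<Longrightarrow> N i > 0"
    and F_nonneg: "\<And>i j. i < n \<Longrightarrow> j < n \<Longrightarrow> i \<noteq> j \<Longrightarrow> F i j \<ge> 0"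
    and F_diag: "\<And>i. i < n \<Longrightarrow> F i i = 0"
    and A1: "\<And>j. j < n \<Longrightarrow>
      (\<Sum>i\<in>{..<n} - {j}. F j i) = (\<Sum>i\<in>{..<n} - {j}. F i j)"
    and rates_pos: "\<And>i. i < n \<Longrightarrow> \<alpha> i > 0 \<and> \<beta> i > 0 \<and> \<sigma> i > 0 \<and> \<delta> i > 0"
    and t0_nonneg: "t0 \<ge> 0"
    and init: "\<And>i. i < n \<Longrightarrow>
      s i t0 \<in> {0..1} \<and> e i t0 \<in> {0..1} \<and> x i t0 \<in> {0..1} \<and> r i t0 \<in> {0..1} \<and>
      s i t0 + e i t0 + x i t0 + r i t0 = 1"
    and ds: "\<And>i t. i < n \<Longrightarrow> t \<ge> t0 \<Longrightarrow>
      (s i has_real_derivative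
        (\<alpha> i * r i t - \<beta> i * x i t * s i t
         + (1 / N i) * (\<Sum>j\<in>{..<n} - {i}. F i j * s j t - F j i * s i t)))
      (at t within {t0..})"
    and de: "\<And>i t. i < n \<Longrightarrow> t \<ge> t0 \<Longrightarrow>
      (e i has_real_derivative
        (\<beta> i * x i t * s i t - \<sigma> i * e i t
         + (1 / N i) * (\<Sum>j\<in>{..<n} - {i}. F i j * e j t - F j i * e i t)))
      (at t within {t0..})"
    and dx: "\<And>i t. i < n \<Longrightarrow> t \<ge> t0 \<Longrightarrow>
      (x i has_real_derivative
        (\<sigma> i * e i t - \<delta> i * x i t
         + (1 / N i) * (\<Sum>j\<in>{..<n} - {i}. F i j * x j t - F j i * x i t)))
      (at t within {t0..})"
    and dr: "\<And>i t. i < n \<Longrightarrow> t \<ge> t0 \<Longrightarrow>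
      (r i has_real_derivative
        (\<delta> i * x i t - \<alpha> i * r i t
         + (1 / N i) * (\<Sum>j\<in>{..<n} - {i}. F i j * r j t - F j i * r i t)))
      (at t within {t0..})"
  shows "\<forall>i<n. \<forall>t\<ge>t0.
      s i t \<in> {0..1} \<and> e i t \<in> {0..1} \<and> x i t \<in> {0..1} \<and> r i t \<in> {0..1} \<and>
      s i t + e i t + x i t + r i t = 1"
proof -
  define K where "K = {..<n} \<times> {..<4::nat}"
  have finK: "finite K" unfolding K_def by simp
  define u where "u = (\<lambda>i t. s i t + e i t + x i t + r i t)"
  define Du where "Du = (\<lambda>i t. (1 / N i) * (\<Sum>j\<in>{..<n} - {i}. F i j * u j t - F j i * u i t))"
  have du: "(u i has_real_derivative Du i t) (at t within {t0..})" if "i < n" "t \<ge> t0" for i t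
  proof -
    have h: "((\<lambda>t. s i t + e i t + x i t + r i t) has_real_derivative
        (\<alpha> i * r i t - \<beta> i * x i t * s i t
         + (1 / N i) * (\<Sum>j\<in>{..<n} - {i}. F i j * s j t - F j i * s i t))
      + (\<beta> i * x i t * s i t - \<sigma> i * e i t
         + (1 / N i) * (\<Sum>j\<in>{..<n} - {i}. F i j * e j t - F j i * e i t))
      + (\<sigma> i * e i t - \<delta> i * x i t
         + (1 / N i) * (\<Sum>j\<in>{..<n} - {i}. F i j * x j t - F j i * x i t))
      + (\<delta> i * x i t - \<alpha> i * r i t
         + (1 / N i) * (\<Sum>j\<in>{..<n} - {i}. F i j * r j t - F j i * r i t))) (at t within {t0..})"
      using DERIV_add[OF DERIV_add[OF DERIV_add[OF ds[OF that] de[OF that]] dx[OF that]] dr[OF that]] by simp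
    have fs: "(\<Sum>j\<in>{..<n} - {i}. F i j * s j t - F j i * s i t) + (\<Sum>j\<in>{..<n} - {i}. F i j * e j t - F j i * e i t)
       + (\<Sum>j\<in>{..<n} - {i}. F i j * x j t - F j i * x i t) + (\<Sum>j\<in>{..<n} - {i}. F i j * r j t - F j i * r i t)
       = (\<Sum>j\<in>{..<n} - {i}. F i j * u j t - F j i * u i t)"
      unfolding u_def by (simp add: sum.distrib[symmetric] algebra_simps)
    have eq: "(\<alpha> i * r i t - \<beta> i * x i t * s i t
         + (1 / N i) * (\<Sum>j\<in>{..<n} - {i}. F i j * s j t - F j i * s i t))
      + (\<beta> i * x i t * s i t - \<sigma> i * e i t
         + (1 / N i) * (\<Sum>j\<in>{..<n} - {i}. F i j * e j t - F j i * e i t))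
      + (\<sigma> i * e i t - \<delta> i * x i t
         + (1 / N i) * (\<Sum>j\<in>{..<n} - {i}. F i j * x j t - F j i * x i t))
      + (\<delta> i * x i t - \<alpha> i * r i t
         + (1 / N i) * (\<Sum>j\<in>{..<n} - {i}. F i j * r j t - F j i * r i t)) = Du i t"
      unfolding Du_def fs[symmetric] by (simp add: algebra_simps)
    show ?thesis using h unfolding eq u_def .
  qed
  have A1': "(\<Sum>j\<in>{..<n} - {i}. F i j) = (\<Sum>j\<in>{..<n} - {i}. F j i)" if "i < n" for i
    using A1[OF that] .
  have Fn: "\<And>j. j < n \<Longrightarrow> j \<noteq> i \<Longrightarrow> F i j \<ge> 0" if "i < n" for i
    using F_nonneg that by auto
  have u_ge: "u i t - 1 \<ge> 0" if "i < n" "t \<ge> t0" for i t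
  proof (rule nonneg_invariance[where y = "\<lambda>i t. u i t - 1" and D = Du and K = "{..<n}" and tz = t0])
    show "finite {..<n}" by simp
    show "((\<lambda>t. u k t - 1) has_real_derivative Du k t) (at t within {t0..})"
      if "k \<in> {..<n}" "t \<ge> t0" for k t
      using DERIV_diff[OF du[of k t] DERIV_const[of 1]] that by simp
    show "u k t0 - 1 \<ge> 0" if "k \<in> {..<n}" for k using init[of k] that unfolding u_def by simp
    show "\<exists>L. \<forall>t. t0 \<le> t \<and> t \<le> T \<and> u k t - 1 \<le> 0 \<and> (\<forall>j\<in>{..<n}. u k t - 1 \<le> u j t - 1)
        \<longrightarrow> L * (u k t - 1) \<le> Du k t" if "k \<in> {..<n}" for T k
    proof (intro exI[of _ 0] allI impI)
      fix t assume H: "t0 \<le> t \<and> t \<le> T \<and> u k t - 1 \<le> 0 \<and> (\<forall>j\<in>{..<n}. u k t - 1 \<le> u j t - 1)"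
      have "0 \<le> Du k t" unfolding Du_def
        using flow_nonneg[of k n N F "\<lambda>j. u j t"] that N_pos Fn A1' H by auto
      then show "0 * (u k t - 1) \<le> Du k t" by simp
    qed
  qed (use that in auto)
  have u_le: "1 - u i t \<ge> 0" if "i < n" "t \<ge> t0" for i t
  proof (rule nonneg_invariance[where y = "\<lambda>i t. 1 - u i t" and D = "\<lambda>i t. - Du i t" and K = "{..<n}" and tz = t0])
    show "finite {..<n}" by simp
    show "((\<lambda>t. 1 - u k t) has_real_derivative - Du k t) (at t within {t0..})"
      if "k \<in> {..<n}" "t \<ge> t0" for k t
      using DERIV_diff[OF DERIV_const[of 1] du[of k t]] that by simp
    show "1 - u k t0 \<ge> 0" if "k \<in> {..<n}" for k using init[of k] that unfolding u_def by simp
    show "\<exists>L. \<forall>t. t0 \<le> t \<and> t \<le> T \<and> 1 - u k t \<le> 0 \<and> (\<forall>j\<in>{..<n}. 1 - u k t \<le> 1 - u j t)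
        \<longrightarrow> L * (1 - u k t) \<le> - Du k t" if "k \<in> {..<n}" for T k
    proof (intro exI[of _ 0] allI impI)
      fix t assume H: "t0 \<le> t \<and> t \<le> T \<and> 1 - u k t \<le> 0 \<and> (\<forall>j\<in>{..<n}. 1 - u k t \<le> 1 - u j t)"
      have "0 \<le> (1 / N k) * (\<Sum>j\<in>{..<n} - {k}. F k j * (- u j t) - F j k * (- u k t))"
        using flow_nonneg[of k n N F "\<lambda>j. - u j t"] that N_pos Fn A1' H by auto
      also have "\<dots> = - Du k t"
      proof -
        have "(\<Sum>j\<in>{..<n} - {k}. F k j * (- u j t) - F j k * (- u k t))
            = - (\<Sum>j\<in>{..<n} - {k}. F k j * u j t - F j k * u k t)"
          by (simp add: sum_subtractf sum_negf)
        then show ?thesis unfolding Du_def by simp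
      qed
      finally show "0 * (1 - u k t) \<le> - Du k t" by simp
    qed
  qed (use that in auto)
  have usum: "s i t + e i t + x i t + r i t = 1" if "i < n" "t \<ge> t0" for i t
    using u_ge[OF that] u_le[OF that] unfolding u_def by simp
  define Y where "Y = (\<lambda>p::nat\<times>nat. case p of (i, c) \<Rightarrow>
      if c = 0 then s i else if c = 1 then e i else if c = 2 then x i else r i)"
  define DY where "DY = (\<lambda>(p::nat\<times>nat) t. case p of (i, c) \<Rightarrow>
      if c = 0 then (\<alpha> i * r i t - \<beta> i * x i t * s i t
         + (1 / N i) * (\<Sum>j\<in>{..<n} - {i}. F i j * s j t - F j i * s i t))
      else if c = 1 then (\<beta> i * x i t * s i t - \<sigma> i * e i t
         + (1 / N i) * (\<Sum>j\<in>{..<n} - {i}. F i j * e j t - F j i * e i t))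
      else if c = 2 then (\<sigma> i * e i t - \<delta> i * x i t
         + (1 / N i) * (\<Sum>j\<in>{..<n} - {i}. F i j * x j t - F j i * x i t))
      else (\<delta> i * x i t - \<alpha> i * r i t
         + (1 / N i) * (\<Sum>j\<in>{..<n} - {i}. F i j * r j t - F j i * r i t)))"
  have c4: "c = 0 \<or> c = 1 \<or> c = 2 \<or> c = 3" if "c < (4::nat)" for c using that by auto
  have Ys: "Y (i,0) = s i" "Y (i,1) = e i" "Y (i,2) = x i" "Y (i,3) = r i" for i
    unfolding Y_def by auto
  have minfacts: "Y (i,c) t \<le> s j t \<and> Y (i,c) t \<le> e j t \<and> Y (i,c) t \<le> x j t \<and> Y (i,c) t \<le> r j t"
    if "\<forall>q\<in>K. Y (i,c) t \<le> Y q t" "j < n" for i c t j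
  proof -
    have "(j,0) \<in> K" "(j,1) \<in> K" "(j,2) \<in> K" "(j,3) \<in> K" using that(2) unfolding K_def by auto
    then show ?thesis using that(1) Ys by metis
  qed
  have Ypos: "Y p t \<ge> 0" if "p \<in> K" "t \<ge> t0" for p t
  proof (rule nonneg_invariance[where y = Y and D = DY and K = K and tz = t0])
    show "finite K" by (rule finK)
    show "(Y k has_real_derivative DY k t) (at t within {t0..})" if "k \<in> K" "t \<ge> t0" for k t
    proof -
      obtain i c where k: "k = (i,c)" "i < n" "c < 4" using \<open>k \<in> K\<close> unfolding K_def by auto
      show ?thesis using c4[OF k(3)] ds[OF k(2) that(2)] de[OF k(2) that(2)] dx[OF k(2) that(2)] dr[OF k(2) that(2)]
        unfolding k(1) Y_def DY_def by auto
    qed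
    show "Y k t0 \<ge> 0" if "k \<in> K" for k
    proof -
      obtain i c where k: "k = (i,c)" "i < n" "c < 4" using \<open>k \<in> K\<close> unfolding K_def by auto
      show ?thesis using c4[OF k(3)] init[OF k(2)] unfolding k(1) Y_def by auto
    qed
    show "\<exists>L. \<forall>t. t0 \<le> t \<and> t \<le> T \<and> Y k t \<le> 0 \<and> (\<forall>j\<in>K. Y k t \<le> Y j t) \<longrightarrow> L * Y k t \<le> DY k t"
      if "k \<in> K" for T k
    proof -
      obtain i c where k: "k = (i,c)" "i < n" "c < 4" using \<open>k \<in> K\<close> unfolding K_def by auto
      have pos: "\<alpha> i > 0" "\<beta> i > 0" "\<sigma> i > 0" "\<delta> i > 0" using rates_pos[OF k(2)] by auto
      obtain Bx where Bx: "\<forall>t\<in>{t0..T}. \<bar>x i t\<bar> \<le> Bx" using bnd_deriv[OF dx[OF k(2)]] by blast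
      obtain Bs where Bs: "\<forall>t\<in>{t0..T}. \<bar>s i t\<bar> \<le> Bs" using bnd_deriv[OF ds[OF k(2)]] by blast
      define B where "B = \<bar>Bx\<bar> + \<bar>Bs\<bar>"
      have flow: "0 \<le> (1 / N i) * (\<Sum>j\<in>{..<n} - {i}. F i j * z j - F j i * z i)"
        if "\<And>j. j < n \<Longrightarrow> z i \<le> z j" for z
        using flow_nonneg[of i n N F z] k(2) N_pos Fn A1' that by auto
      show ?thesis
      proof (intro exI[of _ "if c = 0 then \<alpha> i + \<beta> i * B else if c = 1 then \<beta> i * B else if c = 2 then \<sigma> i else \<delta> i"] allI impI)
        fix t assume H: "t0 \<le> t \<and> t \<le> T \<and> Y k t \<le> 0 \<and> (\<forall>j\<in>K. Y k t \<le> Y j t)"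
        have tT: "t \<in> {t0..T}" using H by auto
        have xB: "\<bar>x i t\<bar> \<le> B" using Bx tT unfolding B_def by force
        have sB: "\<bar>s i t\<bar> \<le> B" using Bs tT unfolding B_def by force
        have mf: "\<And>j. j < n \<Longrightarrow> Y (i,c) t \<le> s j t \<and> Y (i,c) t \<le> e j t \<and> Y (i,c) t \<le> x j t \<and> Y (i,c) t \<le> r j t"
          using minfacts H k(1) by blast
        have mi: "Y (i,c) t \<le> s i t \<and> Y (i,c) t \<le> e i t \<and> Y (i,c) t \<le> x i t \<and> Y (i,c) t \<le> r i t"
          using mf[OF k(2)] .
        have neg: "Y (i,c) t \<le> 0" using H k(1) by simp
        consider "c = 0" | "c = 1" | "c = 2" | "c = 3" using c4[OF k(3)] by blast
        then show "(if c = 0 then \<alpha> i + \<beta> i * B else if c = 1 then \<beta> i * B else if c = 2 then \<sigma> i else \<delta> i) * Y k t \<le> DY k t"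
        proof cases
          case 1
          have Y: "Y (i,c) t = s i t" using 1 Ys by simp
          have fl: "0 \<le> (1 / N i) * (\<Sum>j\<in>{..<n} - {i}. F i j * s j t - F j i * s i t)"
            using flow[of "\<lambda>j. s j t"] mf Y by auto
          have r1: "\<alpha> i * s i t \<le> \<alpha> i * r i t" using mi Y pos by simp
          have "x i t * s i t \<le> \<bar>x i t * s i t\<bar>" by simp
          also have "\<dots> = \<bar>x i t\<bar> * \<bar>s i t\<bar>" by (simp add: abs_mult)
          also have "\<dots> \<le> B * \<bar>s i t\<bar>" using xB by (intro mult_right_mono) auto
          also have "\<dots> = - (B * s i t)" using neg Y by simp
          finally have "x i t * s i t \<le> - (B * s i t)" .
          then have r2: "\<beta> i * (x i t * s i t) \<le> \<beta> i * (- (B * s i t))" using pos by (intro mult_left_mono) auto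
          show ?thesis using 1 Y fl r1 r2 unfolding k(1) DY_def by (simp add: algebra_simps)
        next
          case 2
          have Y: "Y (i,c) t = e i t" using 2 Ys by simp
          have fl: "0 \<le> (1 / N i) * (\<Sum>j\<in>{..<n} - {i}. F i j * e j t - F j i * e i t)"
            using flow[of "\<lambda>j. e j t"] mf Y by auto
          have "B * e i t \<le> x i t * s i t" using prod_bound[of "e i t" "x i t" "s i t" B] mi Y neg xB sB by simp
          then have r1: "\<beta> i * (B * e i t) \<le> \<beta> i * (x i t * s i t)" using pos by (intro mult_left_mono) auto
          have r2: "\<sigma> i * e i t \<le> 0" using pos neg Y by (intro mult_nonneg_nonpos) auto
          show ?thesis using 2 Y fl r1 r2 unfolding k(1) DY_def by (simp add: algebra_simps)
        next
          case 3
          have Y: "Y (i,c) t = x i t" using 3 Ys by simp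
          have fl: "0 \<le> (1 / N i) * (\<Sum>j\<in>{..<n} - {i}. F i j * x j t - F j i * x i t)"
            using flow[of "\<lambda>j. x j t"] mf Y by auto
          have r1: "\<sigma> i * x i t \<le> \<sigma> i * e i t" using mi Y pos by simp
          have r2: "\<delta> i * x i t \<le> 0" using pos neg Y by (intro mult_nonneg_nonpos) auto
          show ?thesis using 3 Y fl r1 r2 unfolding k(1) DY_def by (simp add: algebra_simps)
        next
          case 4
          have Y: "Y (i,c) t = r i t" using 4 Ys by simp
          have fl: "0 \<le> (1 / N i) * (\<Sum>j\<in>{..<n} - {i}. F i j * r j t - F j i * r i t)"
            using flow[of "\<lambda>j. r j t"] mf Y by auto
          have r1: "\<delta> i * r i t \<le> \<delta> i * x i t" using mi Y pos by simp
          have r2: "\<alpha> i * r i t \<le> 0" using pos neg Y by (intro mult_nonneg_nonpos) auto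
          show ?thesis using 4 Y fl r1 r2 unfolding k(1) DY_def by (simp add: algebra_simps)
        qed
      qed
    qed
  qed (use that in auto)
  show ?thesis
  proof (intro allI impI)
    fix i t assume it: "i < n" "t \<ge> t0"
    have "(i,0) \<in> K" "(i,1) \<in> K" "(i,2) \<in> K" "(i,3) \<in> K" using it unfolding K_def by auto
    then have "s i t \<ge> 0" "e i t \<ge> 0" "x i t \<ge> 0" "r i t \<ge> 0" using Ypos it(2) Ys by metis+
    then show "s i t \<in> {0..1} \<and> e i t \<in> {0..1} \<and> x i t \<in> {0..1} \<and> r i t \<in> {0..1} \<and>
      s i t + e i t + x i t + r i t = 1" using usum[OF it] by auto
  qed
qed

end
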